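(* Let $Q$ be a quandle, $G$ a group and $\rho:Q\to\mathrm{Core}(G)$ a quandle homomorphism. Then the map $\theta(\rho):Q\times Q\to G$, $\theta(\rho)_{x,y}=\rho(x)\rho(y)^{-1}$, is a quandle cocycle of $Q$ with values in $G$.
   Context: A quandle is a set $Q$ with a binary operation $*$ such that every left translation $L_x:y\mapsto x*y$ is bijective, $x*(y*z)=(x*y)*(x*z)$ and $x*x=x$. $\mathrm{Core}(G)$ is the quandle on $G$ with $x*y=xy^{-1}x$. A quandle cocycle with values in a group $G$ is a map $\theta:Q\times Q\to G$ with $\theta_{x*y,x*z}\theta_{x,z}=\theta_{x,y*z}\theta_{y,z}$ and $\theta_{x,x}=1$ for all $x,y,z\in Q$. *)

theory Defs
  imports "HOL-Algebra.Group"
begin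

definition quandle :: "'a set \<Rightarrow> ('a \<Rightarrow> 'a \<Rightarrow> 'a) \<Rightarrow> bool" where
  "quandle Q op \<longleftrightarrow>
     (\<forall>x\<in>Q. \<forall>y\<in>Q. op x y \<in> Q) \<and>
     (\<forall>x\<in>Q. bij_betw (op x) Q Q) \<and>
     (\<forall>x\<in>Q. \<forall>y\<in>Q. \<forall>z\<in>Q. op x (op y z) = op (op x y) (op x z)) \<and>
     (\<forall>x\<in>Q. op x x = x)"

definition core_op :: "('g, 'b) monoid_scheme \<Rightarrow> 'g \<Rightarrow> 'g \<Rightarrow> 'g" where
  "core_op G x y = x \<otimes>\<^bsub>G\<^esub> inv\<^bsub>G\<^esub> y \<otimes>\<^bsub>G\<^esub> x"

definition quandle_hom ::
  "'a set \<Rightarrow> ('a \<Rightarrow> 'a \<Rightarrow> 'a) \<Rightarrow> 'c set \<Rightarrow> ('c \<Rightarrow> 'c \<Rightarrow> 'c) \<Rightarrow> ('a \<Rightarrow> 'c) \<Rightarrow> bool" where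
  "quandle_hom Q op P op' f \<longleftrightarrow>
     (\<forall>x\<in>Q. f x \<in> P) \<and> (\<forall>x\<in>Q. \<forall>y\<in>Q. f (op x y) = op' (f x) (f y))"

definition quandle_cocycle ::
  "'a set \<Rightarrow> ('a \<Rightarrow> 'a \<Rightarrow> 'a) \<Rightarrow> ('g, 'b) monoid_scheme \<Rightarrow> ('a \<Rightarrow> 'a \<Rightarrow> 'g) \<Rightarrow> bool" where
  "quandle_cocycle Q op G \<theta> \<longleftrightarrow>
     (\<forall>x\<in>Q. \<forall>y\<in>Q. \<theta> x y \<in> carrier G) \<and>
     (\<forall>x\<in>Q. \<forall>y\<in>Q. \<forall>z\<in>Q.
        \<theta> (op x y) (op x z) \<otimes>\<^bsub>G\<^esub> \<theta> x z = \<theta> x (op y z) \<otimes>\<^bsub>G\<^esub> \<theta> y z) \<and>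
     (\<forall>x\<in>Q. \<theta> x x = \<one>\<^bsub>G\<^esub>)"

end

theory Submission
  imports Defs
begin

lemma (in group) cancel1: "x \<in> carrier G \<Longrightarrow> y \<in> carrier G \<Longrightarrow> x \<otimes> (inv x \<otimes> y) = y"
  by (simp flip: m_assoc add: r_inv)
lemma (in group) cancel2: "x \<in> carrier G \<Longrightarrow> y \<in> carrier G \<Longrightarrow> inv x \<otimes> (x \<otimes> y) = y"
  by (simp flip: m_assoc add: l_inv)

lemma (in group) core_aux1:
  assumes a: "a \<in> carrier G" and b: "b \<in> carrier G" and c: "c \<in> carrier G"
  shows "(a \<otimes> inv b \<otimes> a) \<otimes> inv (a \<otimes> inv c \<otimes> a) \<otimes> (a \<otimes> inv c) = a \<otimes> inv b"
proof -
  have "inv (a \<otimes> inv c \<otimes> a) = inv a \<otimes> c \<otimes> inv a"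
    using a c by (simp add: inv_mult_group m_assoc)
  then have "(a \<otimes> inv b \<otimes> a) \<otimes> inv (a \<otimes> inv c \<otimes> a) \<otimes> (a \<otimes> inv c)
     = a \<otimes> inv b \<otimes> (a \<otimes> inv a) \<otimes> c \<otimes> (inv a \<otimes> a) \<otimes> inv c" using a b c by (simp add: m_assoc cancel1 cancel2 r_inv)
  also have "\<dots> = a \<otimes> inv b \<otimes> (c \<otimes> inv c)" using a b c by (simp add: m_assoc cancel1 cancel2 r_inv)
  also have "\<dots> = a \<otimes> inv b" using a b c by (simp add: r_inv)
  finally show ?thesis .
qed

lemma (in group) core_aux2:
  assumes a: "a \<in> carrier G" and b: "b \<in> carrier G" and c: "c \<in> carrier G"
  shows "a \<otimes> inv (b \<otimes> inv c \<otimes> b) \<otimes> (b \<otimes> inv c) = a \<otimes> inv b"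
proof -
  have "inv (b \<otimes> inv c \<otimes> b) = inv b \<otimes> c \<otimes> inv b"
    using b c by (simp add: inv_mult_group m_assoc)
  then have "a \<otimes> inv (b \<otimes> inv c \<otimes> b) \<otimes> (b \<otimes> inv c) = a \<otimes> inv b \<otimes> c \<otimes> (inv b \<otimes> b) \<otimes> inv c"
    using a b c by (simp add: m_assoc cancel1 cancel2 r_inv)
  also have "\<dots> = a \<otimes> inv b \<otimes> (c \<otimes> inv c)" using a b c by (simp add: m_assoc cancel1 cancel2 r_inv)
  also have "\<dots> = a \<otimes> inv b" using a b c by (simp add: r_inv)
  finally show ?thesis .
qed

theorem lemma4p2:
  fixes Q :: "'a set" and op :: "'a \<Rightarrow> 'a \<Rightarrow> 'a"
    and G :: "('g, 'b) monoid_scheme" and \<rho> :: "'a \<Rightarrow> 'g"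
  assumes "quandle Q op"
    and "group G"
    and "quandle_hom Q op (carrier G) (core_op G) \<rho>"
  shows "quandle_cocycle Q op G (\<lambda>x y. \<rho> x \<otimes>\<^bsub>G\<^esub> inv\<^bsub>G\<^esub> (\<rho> y))"
proof -
  interpret group G by fact
  have cl: "\<And>x. x \<in> Q \<Longrightarrow> \<rho> x \<in> carrier G"
    and h: "\<And>x y. x \<in> Q \<Longrightarrow> y \<in> Q \<Longrightarrow> \<rho> (op x y) = \<rho> x \<otimes>\<^bsub>G\<^esub> inv\<^bsub>G\<^esub> (\<rho> y) \<otimes>\<^bsub>G\<^esub> \<rho> x"
    using assms(3) by (auto simp: quandle_hom_def core_op_def)
  have "\<rho> (op x y) \<otimes>\<^bsub>G\<^esub> inv\<^bsub>G\<^esub> (\<rho> (op x z)) \<otimes>\<^bsub>G\<^esub> (\<rho> x \<otimes>\<^bsub>G\<^esub> inv\<^bsub>G\<^esub> (\<rho> z)) =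
        \<rho> x \<otimes>\<^bsub>G\<^esub> inv\<^bsub>G\<^esub> (\<rho> (op y z)) \<otimes>\<^bsub>G\<^esub> (\<rho> y \<otimes>\<^bsub>G\<^esub> inv\<^bsub>G\<^esub> (\<rho> z))"
    if "x \<in> Q" "y \<in> Q" "z \<in> Q" for x y z
    using that unfolding h[OF that(1,2)] h[OF that(1,3)] h[OF that(2,3)]
    by (simp only: core_aux1 core_aux2 cl)
  then show ?thesis
    by (auto simp: quandle_cocycle_def cl r_inv)
qed

end
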